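(* Let $\Sigma$ be a ranked alphabet, $B$ a strong bimonoid, $\mathcal{A}=(Q,\delta,F)$ a $(\Sigma,B)$-wta and $q_1,\dots,q_n$ an enumeration of the elements of $Q$. Then there is a final variant $\mathcal{C}$ of $\mathrm{acc}\big(\Pi\big((\mathrm{der}(h^{q_i}_{\mathrm{V}(\mathcal{A})})\mid i\in[n])\big)\big)$ such that $\mathcal{N}(\mathcal{A})$ and $\mathcal{C}$ are isomorphic.
   Context: Ranked alphabet $\Sigma$ ($\Sigma^{(0)}\ne\emptyset$), trees $T_\Sigma$; strong bimonoid $(B,\oplus,\otimes,\mathbb{0},\mathbb{1})$ (commutative monoid $(B,\oplus,\mathbb{0})$, monoid $(B,\otimes,\mathbb{1})$, $\mathbb{0}\ne\mathbb{1}$, $\mathbb{0}$ absorbing, no distributivity). $(\Sigma,B)$-wta $\mathcal{A}=(Q,\delta,F)$: $Q$ finite nonempty, $\delta_k:Q^k\times\Sigma^{(k)}\times Q\to B$, $F:Q\to B$. Vector algebra $\mathrm{V}(\mathcal{A})=(B^Q,\delta_{\mathcal{A}})$, $\delta_{\mathcal{A}}(\sigma)(v_1,\dots,v_k)_q=\bigoplus_{p_1,\dots,p_k}\big(\bigotimes_{i=1}^k(v_i)_{p_i}\big)\otimes\delta_k(p_1\dots p_k,\sigma,q)$; $h_{\mathrm{V}(\mathcal{A})}:T_\Sigma\to B^Q$ the unique homomorphism from the term algebra; $h^q_{\mathrm{V}(\mathcal{A})}:T_\Sigma\to B$, $h^q_{\mathrm{V}(\mathcal{A})}(\xi)=h_{\mathrm{V}(\mathcal{A})}(\xi)_q$.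 A $(\Sigma,B)$-algebra is $\mathcal{K}=(P,\theta,G)$, $(P,\theta)$ a $\Sigma$-algebra, $G:P\to B$; $h_{\mathcal{K}}:T_\Sigma\to P$ the unique homomorphism. A final variant of $\mathcal{K}$ is $(P,\theta,G')$ for any $G':P\to B$. $\mathrm{acc}(\mathcal{K})$ is the $(\Sigma,B)$-subalgebra with carrier $\mathrm{im}(h_{\mathcal{K}})$ (the smallest subalgebra), restricted operations and restricted $G$. Two $(\Sigma,B)$-algebras $(P,\theta,G)$, $(P',\theta',G')$ are isomorphic if there is a bijective $\Sigma$-algebra homomorphism $\varphi:P\to P'$ with $G_p=G'_{\varphi(p)}$ for all $p$. Direct product $\Pi((\mathcal{K}_i)_{i\in[n]})$ of $\mathcal{K}_i=(P_i,\theta_i,G_i)$: carrier $P_1\times\dots\times P_n$, componentwise operations, root weight $(p_1,\dots,p_n)\mapsto\bigotimes_{i=1}^n(G_i)_{p_i}$. Contexts: trees over $\Sigma\cup\{\square\}$ with exactly one occurrence of the new nullary symbol $\square$ (set $C_\Sigma$); $c[\xi]$ substitutes $\xi$ for $\square$. For $r:T_\Sigma\to B$ and $\xi\in T_\Sigma$, $\xi^{-1}r:C_\Sigma\to B$, $(\xi^{-1}r)(c)=r(c[\xi])$. The derivative algebra $\mathrm{der}(r)$ has carrier $\{\xi^{-1}r\mid\xi\in T_\Sigma\}$, operations $\theta(\sigma)(\xi_1^{-1}r,\dots,\xi_k^{-1}r)=\sigma(\xi_1,\dots,\xi_k)^{-1}r$, root weights $\xi^{-1}r\mapsto r(\xi)$.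 Nerode algebra $\mathcal{N}(\mathcal{A})=(Q_{\mathcal{N}},\theta_{\mathcal{N}},F_{\mathcal{N}})$: smallest subalgebra of $\mathrm{V}(\mathcal{A})$ with $(F_{\mathcal{N}})_v=\bigoplus_q v_q\otimes F_q$. *)

theory Defs
  imports Main
begin

text \<open>Strong bimonoids are rendered by the type class combination
  comm_monoid_add (the commutative monoid (B,+,0)), monoid_mult (the monoid (B,*,1)),
  mult_zero (0 absorbing) and zero_neq_one (0 differs from 1); no distributivity.\<close>

definition ranked_alphabet :: "('f \<Rightarrow> nat) \<Rightarrow> bool" where
  "ranked_alphabet rk \<longleftrightarrow> finite (UNIV :: 'f set) \<and> (\<exists>f. rk f = 0)"

datatype 'f tree = Nd 'f "'f tree list"

fun wf_tree :: "('f \<Rightarrow> nat) \<Rightarrow> 'f tree \<Rightarrow> bool" where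
  "wf_tree rk (Nd f ts) \<longleftrightarrow> length ts = rk f \<and> (\<forall>t \<in> set ts. wf_tree rk t)"

definition trees :: "('f \<Rightarrow> nat) \<Rightarrow> 'f tree set" where
  "trees rk = {t. wf_tree rk t}"

text \<open>Contexts: trees over the alphabet extended by the nullary box (None),
  with exactly one occurrence of the box.\<close>
definition rk_box :: "('f \<Rightarrow> nat) \<Rightarrow> 'f option \<Rightarrow> nat" where
  "rk_box rk x = (case x of None \<Rightarrow> 0 | Some f \<Rightarrow> rk f)"

fun box_count :: "'f option tree \<Rightarrow> nat" where
  "box_count (Nd None ts) = Suc (sum_list (map box_count ts))"
| "box_count (Nd (Some f) ts) = sum_list (map box_count ts)"

definition contexts :: "('f \<Rightarrow> nat) \<Rightarrow> 'f option tree set" where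
  "contexts rk = {c. wf_tree (rk_box rk) c \<and> box_count c = 1}"

fun subst :: "'f option tree \<Rightarrow> 'f tree \<Rightarrow> 'f tree" where
  "subst (Nd None ts) \<xi> = \<xi>"
| "subst (Nd (Some f) ts) \<xi> = Nd f (map (\<lambda>t. subst t \<xi>) ts)"

text \<open>A (Sigma,B)-algebra: carrier, operations (theta f applied to a list of
  rk f arguments) and root weight.  Only the values on the carrier matter.\<close>
record ('f, 'a, 'b) salg =
  car :: "'a set"
  ops :: "'f \<Rightarrow> 'a list \<Rightarrow> 'a"
  rw  :: "'a \<Rightarrow> 'b"

definition is_salg :: "('f \<Rightarrow> nat) \<Rightarrow> ('f, 'a, 'b) salg \<Rightarrow> bool" where
  "is_salg rk K \<longleftrightarrow> (\<forall>f ps. length ps = rk f \<and> set ps \<subseteq> car K \<longrightarrow> ops K f ps \<in> car K)"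

fun eval :: "('f \<Rightarrow> 'a list \<Rightarrow> 'a) \<Rightarrow> 'f tree \<Rightarrow> 'a" where
  "eval \<theta> (Nd f ts) = \<theta> f (map (eval \<theta>) ts)"

definition hom_K :: "('f, 'a, 'b) salg \<Rightarrow> 'f tree \<Rightarrow> 'a" where
  "hom_K K = eval (ops K)"

definition acc :: "('f \<Rightarrow> nat) \<Rightarrow> ('f, 'a, 'b) salg \<Rightarrow> ('f, 'a, 'b) salg" where
  "acc rk K = \<lparr>car = hom_K K ` trees rk, ops = ops K, rw = rw K\<rparr>"

definition final_variant :: "('f, 'a, 'b) salg \<Rightarrow> ('a \<Rightarrow> 'b) \<Rightarrow> ('f, 'a, 'b) salg" where
  "final_variant K G' = \<lparr>car = car K, ops = ops K, rw = G'\<rparr>"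

definition salg_iso :: "('f \<Rightarrow> nat) \<Rightarrow> ('f, 'a, 'b) salg \<Rightarrow> ('f, 'c, 'b) salg \<Rightarrow> bool" where
  "salg_iso rk K K' \<longleftrightarrow> (\<exists>\<phi>. bij_betw \<phi> (car K) (car K')
     \<and> (\<forall>f ps. length ps = rk f \<and> set ps \<subseteq> car K \<longrightarrow> \<phi> (ops K f ps) = ops K' f (map \<phi> ps))
     \<and> (\<forall>p \<in> car K. rw K p = rw K' (\<phi> p)))"

text \<open>Direct product of a finite list of (Sigma,B)-algebras (same carrier type);
  tuples are lists of length n; root weight is the ordered product.\<close>
definition dprod :: "('f, 'a, 'b::monoid_mult) salg list \<Rightarrow> ('f, 'a list, 'b) salg" where
  "dprod Ks = \<lparr>car = {ps. length ps = length Ks \<and> (\<forall>i < length Ks. ps ! i \<in> car (Ks ! i))},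
     ops = (\<lambda>f vs. map (\<lambda>i. ops (Ks ! i) f (map (\<lambda>v. v ! i) vs)) [0..<length Ks]),
     rw = (\<lambda>ps. prod_list (map (\<lambda>i. rw (Ks ! i) (ps ! i)) [0..<length Ks]))\<rparr>"

text \<open>xi^{-1} r as a function on contexts (value 0 outside the set of contexts).\<close>
definition deriv :: "('f \<Rightarrow> nat) \<Rightarrow> ('f tree \<Rightarrow> 'b::zero) \<Rightarrow> 'f tree \<Rightarrow> ('f option tree \<Rightarrow> 'b)" where
  "deriv rk r \<xi> = (\<lambda>c. if c \<in> contexts rk then r (subst c \<xi>) else 0)"

definition der_rep :: "('f \<Rightarrow> nat) \<Rightarrow> ('f tree \<Rightarrow> 'b::zero) \<Rightarrow> ('f option tree \<Rightarrow> 'b) \<Rightarrow> 'f tree" where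
  "der_rep rk r d = (SOME \<xi>. \<xi> \<in> trees rk \<and> deriv rk r \<xi> = d)"

definition der :: "('f \<Rightarrow> nat) \<Rightarrow> ('f tree \<Rightarrow> 'b::zero) \<Rightarrow> ('f, 'f option tree \<Rightarrow> 'b, 'b) salg" where
  "der rk r = \<lparr>car = deriv rk r ` trees rk,
     ops = (\<lambda>f ds. deriv rk r (Nd f (map (der_rep rk r) ds))),
     rw = (\<lambda>d. r (der_rep rk r d))\<rparr>"

text \<open>A wta over a finite state type 'q: transition weights delta ps f q
  (meaningful for length ps = rk f) and root weights F.\<close>
definition vec_ops :: "('q::finite list \<Rightarrow> 'f \<Rightarrow> 'q \<Rightarrow> 'b::{comm_monoid_add, monoid_mult})
    \<Rightarrow> 'f \<Rightarrow> ('q \<Rightarrow> 'b) list \<Rightarrow> ('q \<Rightarrow> 'b)" where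
  "vec_ops \<delta> f vs = (\<lambda>q. \<Sum>ps \<in> {ps. length ps = length vs}.
       prod_list (map2 (\<lambda>v p. v p) vs ps) * \<delta> ps f q)"

definition hV :: "('q::finite list \<Rightarrow> 'f \<Rightarrow> 'q \<Rightarrow> 'b::{comm_monoid_add, monoid_mult})
    \<Rightarrow> 'f tree \<Rightarrow> ('q \<Rightarrow> 'b)" where
  "hV \<delta> = eval (vec_ops \<delta>)"

definition nerode :: "('f \<Rightarrow> nat) \<Rightarrow> ('q::finite list \<Rightarrow> 'f \<Rightarrow> 'q \<Rightarrow> 'b::{comm_monoid_add, monoid_mult})
    \<Rightarrow> ('q \<Rightarrow> 'b) \<Rightarrow> ('f, 'q \<Rightarrow> 'b, 'b) salg" where
  "nerode rk \<delta> F = acc rk \<lparr>car = UNIV, ops = vec_ops \<delta>, rw = (\<lambda>v. \<Sum>q\<in>UNIV. v q * F q)\<rparr>"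

end

theory Submission
  imports Defs
begin

fun lift :: "'f tree \<Rightarrow> 'f option tree" where
  "lift (Nd f ts) = Nd (Some f) (map lift ts)"

fun cc :: "'f option tree \<Rightarrow> 'f option tree \<Rightarrow> 'f option tree" where
  "cc (Nd None ts) d = d"
| "cc (Nd (Some f) ts) d = Nd (Some f) (map (\<lambda>t. cc t d) ts)"

lemma box_lift: "box_count (lift t) = 0"
  by (induction t) (auto simp: comp_def intro!: sum_list_eq_0_iff[THEN iffD2])

lemma subst_lift: "subst (lift t) \<xi> = t"
  by (induction t) (auto simp: comp_def intro: map_idI)

lemma wf_lift: "wf_tree rk t \<Longrightarrow> wf_tree (rk_box rk) (lift t)"
  by (induction t) (auto simp: rk_box_def)

lemma subst_cc: "subst (cc c d) \<xi> = subst c (subst d \<xi>)"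
  by (induction c d rule: cc.induct) auto

lemma wf_cc: "wf_tree (rk_box rk) c \<Longrightarrow> wf_tree (rk_box rk) d \<Longrightarrow> wf_tree (rk_box rk) (cc c d)"
  by (induction c d rule: cc.induct) (auto simp: rk_box_def)

lemma box_cc: "wf_tree (rk_box rk) c \<Longrightarrow> box_count (cc c d) = box_count c * box_count d"
proof (induction c d rule: cc.induct)
  case (1 ts d)
  then show ?case by (auto simp: rk_box_def)
next
  case (2 f ts d)
  have "sum_list (map (\<lambda>t. box_count (cc t d)) ts) = sum_list (map (\<lambda>t. box_count t * box_count d) ts)"
    using 2 by (intro arg_cong[where f=sum_list] map_cong) auto
  then show ?case by (simp add: comp_def sum_list_mult_const)
qed

lemma cc_ctx: "c \<in> contexts rk \<Longrightarrow> d \<in> contexts rk \<Longrightarrow> cc c d \<in> contexts rk"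
  by (auto simp: contexts_def wf_cc box_cc)

lemma trees_Nd: "Nd f ts \<in> trees rk \<longleftrightarrow> length ts = rk f \<and> set ts \<subseteq> trees rk"
  by (auto simp: trees_def)

lemma deriv_single:
  assumes "a \<in> trees rk" "b \<in> trees rk" "deriv rk r a = deriv rk r b"
    and "set xs \<subseteq> trees rk" "set ys \<subseteq> trees rk" "length xs + Suc (length ys) = rk f"
  shows "deriv rk r (Nd f (xs @ a # ys)) = deriv rk r (Nd f (xs @ b # ys))"
proof
  fix c
  define d where "d = Nd (Some f) (map lift xs @ Nd None [] # map lift ys)"
  have dctx: "d \<in> contexts rk"
    using assms(4-6) by (auto simp: d_def contexts_def rk_box_def trees_def wf_lift box_lift comp_def
        intro!: sum_list_eq_0_iff[THEN iffD2])
  have sd: "subst d x = Nd f (xs @ x # ys)" for x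
    by (simp add: d_def comp_def subst_lift)
  show "deriv rk r (Nd f (xs @ a # ys)) c = deriv rk r (Nd f (xs @ b # ys)) c"
  proof (cases "c \<in> contexts rk")
    case True
    have "r (subst (cc c d) a) = r (subst (cc c d) b)"
      using fun_cong[OF assms(3), of "cc c d"] cc_ctx[OF True dctx] by (simp add: deriv_def)
    then show ?thesis using True by (simp add: deriv_def subst_cc sd)
  qed (simp add: deriv_def)
qed

lemma deriv_cong_gen:
  "list_all2 (\<lambda>a b. a \<in> trees rk \<and> b \<in> trees rk \<and> deriv rk r a = deriv rk r b) as bs \<Longrightarrow>
   set xs \<subseteq> trees rk \<Longrightarrow> length xs + length as = rk f \<Longrightarrow>
   deriv rk r (Nd f (xs @ as)) = deriv rk r (Nd f (xs @ bs))"
proof (induction as arbitrary: xs bs)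
  case Nil
  then show ?case by simp
next
  case (Cons a as)
  then obtain b bs' where bs: "bs = b # bs'" by (cases bs) auto
  with Cons.prems have h: "a \<in> trees rk" "b \<in> trees rk" "deriv rk r a = deriv rk r b"
    and l: "list_all2 (\<lambda>a b. a \<in> trees rk \<and> b \<in> trees rk \<and> deriv rk r a = deriv rk r b) as bs'"
    by auto
  have "set as \<subseteq> trees rk" using l by (induction as bs' rule: list_all2_induct) auto
  then have "deriv rk r (Nd f (xs @ a # as)) = deriv rk r (Nd f (xs @ b # as))"
    using Cons.prems h by (intro deriv_single) auto
  also have "\<dots> = deriv rk r (Nd f ((xs @ [b]) @ as))" by simp
  also have "\<dots> = deriv rk r (Nd f ((xs @ [b]) @ bs'))"
    using Cons.prems h l by (intro Cons.IH) auto
  finally show ?case by (simp add: bs)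
qed

lemma deriv_cong:
  assumes "set ts \<subseteq> trees rk" "length ts = rk f"
  shows "deriv rk r (Nd f (map (der_rep rk r) (map (deriv rk r) ts))) = deriv rk r (Nd f ts)"
proof -
  have rep: "der_rep rk r (deriv rk r t) \<in> trees rk \<and> deriv rk r (der_rep rk r (deriv rk r t)) = deriv rk r t"
    if "t \<in> trees rk" for t
    unfolding der_rep_def using that by (metis (mono_tags, lifting) someI)
  have "list_all2 (\<lambda>a b. a \<in> trees rk \<and> b \<in> trees rk \<and> deriv rk r a = deriv rk r b)
      (map (der_rep rk r) (map (deriv rk r) ts)) ts"
    using assms(1) rep by (auto simp: list_all2_conv_all_nth subset_iff)
  from deriv_cong_gen[OF this, of "[]"] assms show ?thesis by simp
qed

lemma generic_iso:
  fixes K :: "('f, 'a, 'b) salg" and K' :: "('f, 'c, 'b) salg"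
  assumes cK: "car K = h ` trees rk" and cK': "car K' = h' ` trees rk"
    and oK: "\<And>f ts. set ts \<subseteq> trees rk \<Longrightarrow> length ts = rk f \<Longrightarrow> ops K f (map h ts) = h (Nd f ts)"
    and oK': "\<And>f ts. set ts \<subseteq> trees rk \<Longrightarrow> length ts = rk f \<Longrightarrow> ops K' f (map h' ts) = h' (Nd f ts)"
    and eq: "\<And>a b. a \<in> trees rk \<Longrightarrow> b \<in> trees rk \<Longrightarrow> h a = h b \<longleftrightarrow> h' a = h' b"
  shows "\<exists>G'. salg_iso rk K (final_variant K' G')"
proof -
  define pick where "pick p = (SOME \<xi>. \<xi> \<in> trees rk \<and> h \<xi> = p)" for p
  have pick: "pick p \<in> trees rk \<and> h (pick p) = p" if "p \<in> car K" for p
  proof -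
    from that cK obtain \<xi> where "\<xi> \<in> trees rk" "h \<xi> = p" by auto
    then show ?thesis unfolding pick_def by (metis (mono_tags, lifting) someI)
  qed
  define \<phi> where "\<phi> p = h' (pick p)" for p
  have phi_h: "\<phi> (h \<xi>) = h' \<xi>" if "\<xi> \<in> trees rk" for \<xi>
  proof -
    have "h \<xi> \<in> car K" using that cK by auto
    from pick[OF this] have "h (pick (h \<xi>)) = h \<xi>" "pick (h \<xi>) \<in> trees rk" by auto
    then show ?thesis using eq that by (auto simp: \<phi>_def)
  qed
  have bij: "bij_betw \<phi> (car K) (car K')"
    unfolding bij_betw_def
  proof
    show "inj_on \<phi> (car K)"
    proof
      fix x y assume "x \<in> car K" "y \<in> car K" "\<phi> x = \<phi> y"
      then obtain a b where "a \<in> trees rk" "b \<in> trees rk" "x = h a" "y = h b" using cK by auto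
      then show "x = y" using \<open>\<phi> x = \<phi> y\<close> phi_h eq by auto
    qed
    show "\<phi> ` car K = car K'" using cK cK' phi_h by (auto simp: image_image)
  qed
  have hom: "\<phi> (ops K f ps) = ops K' f (map \<phi> ps)" if "length ps = rk f" "set ps \<subseteq> car K" for f ps
  proof -
    define ts where "ts = map pick ps"
    have ts: "set ts \<subseteq> trees rk" "map h ts = ps" "length ts = rk f"
      using that pick by (auto simp: ts_def intro!: map_idI)
    have "\<phi> (ops K f ps) = \<phi> (h (Nd f ts))" using oK ts by metis
    also have "\<dots> = h' (Nd f ts)" using ts by (intro phi_h) (auto simp: trees_Nd)
    also have "\<dots> = ops K' f (map h' ts)" using oK' ts by metis
    also have "map h' ts = map \<phi> ps" by (simp add: ts_def \<phi>_def)
    finally show ?thesis .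
  qed
  define G' where "G' p = rw K (inv_into (car K) \<phi> p)" for p
  have "salg_iso rk K (final_variant K' G')"
    unfolding salg_iso_def final_variant_def
    using bij hom by (auto simp: G'_def bij_betw_def)
  then show ?thesis by blast
qed

lemma hV_subst: "hV \<delta> \<xi> = hV \<delta> \<xi>' \<Longrightarrow> hV \<delta> (subst c \<xi>) = hV \<delta> (subst c \<xi>')"
proof (induction c \<xi> rule: subst.induct)
  case (1 ts \<xi>)
  then show ?case by simp
next
  case (2 f ts \<xi>)
  then show ?case by (simp add: hV_def comp_def) (metis (no_types, lifting) map_eq_conv)
qed

theorem theorem6p7:
  fixes rk :: "'f \<Rightarrow> nat"
    and \<delta> :: "'q::finite list \<Rightarrow> 'f \<Rightarrow> 'q \<Rightarrow> 'b::{comm_monoid_add, monoid_mult, mult_zero, zero_neq_one}"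
    and F :: "'q \<Rightarrow> 'b"
    and qs :: "'q list"
  assumes "ranked_alphabet rk"
    and "distinct qs" and "set qs = UNIV"
  shows "\<exists>G'. salg_iso rk (nerode rk \<delta> F)
           (final_variant (acc rk (dprod (map (\<lambda>q. der rk (\<lambda>\<xi>. hV \<delta> \<xi> q)) qs))) G')"
proof -
  define r where "r q = (\<lambda>\<xi>. hV \<delta> \<xi> q)" for q
  define Ks where "Ks = map (\<lambda>q. der rk (r q)) qs"
  define D where "D = dprod Ks"
  define E where "E \<xi> = map (\<lambda>q. deriv rk (r q) \<xi>) qs" for \<xi>
  have evalD: "eval (ops D) \<xi> = E \<xi>" if "\<xi> \<in> trees rk" for \<xi>
    using that
  proof (induction \<xi>)
    case (Nd f ts)
    have ts: "set ts \<subseteq> trees rk" "length ts = rk f" using Nd.prems by (auto simp: trees_Nd)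
    have "eval (ops D) (Nd f ts) = ops D f (map (eval (ops D)) ts)" by simp
    also have "map (eval (ops D)) ts = map E ts" using Nd.IH ts by auto
    also have "ops D f (map E ts) = E (Nd f ts)"
    proof (rule nth_equalityI)
      show "length (ops D f (map E ts)) = length (E (Nd f ts))"
        by (simp add: D_def dprod_def Ks_def E_def)
      fix i assume "i < length (ops D f (map E ts))"
      then have i: "i < length qs" by (simp add: D_def dprod_def Ks_def)
      have m: "map (\<lambda>v. v ! i) (map E ts) = map (deriv rk (r (qs ! i))) ts"
        using i by (simp add: E_def)
      have "ops D f (map E ts) ! i = ops (Ks ! i) f (map (\<lambda>v. v ! i) (map E ts))"
        using i by (simp add: D_def dprod_def Ks_def)
      also have "\<dots> = deriv rk (r (qs ! i)) (Nd f (map (der_rep rk (r (qs ! i))) (map (deriv rk (r (qs ! i))) ts)))"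
        using i by (simp only: m) (simp add: Ks_def der_def)
      also have "\<dots> = deriv rk (r (qs ! i)) (Nd f ts)" using ts by (rule deriv_cong)
      also have "\<dots> = E (Nd f ts) ! i" using i by (simp add: E_def)
      finally show "ops D f (map E ts) ! i = E (Nd f ts) ! i" .
    qed
    finally show ?case .
  qed
  have ctx0: "Nd None [] \<in> contexts rk"
    by (simp add: contexts_def rk_box_def)
  have eq: "hV \<delta> a = hV \<delta> b \<longleftrightarrow> E a = E b" for a b
  proof
    assume "hV \<delta> a = hV \<delta> b"
    then show "E a = E b"
      by (auto simp: E_def deriv_def r_def intro!: ext) (metis hV_subst)
  next
    assume "E a = E b"
    then have "\<forall>q \<in> set qs. deriv rk (r q) a = deriv rk (r q) b" by (simp add: E_def)
    then have "\<forall>q. hV \<delta> a q = hV \<delta> b q"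
      using assms(3) ctx0 by (auto simp: deriv_def r_def dest!: fun_cong[where x="Nd None []"])
    then show "hV \<delta> a = hV \<delta> b" by auto
  qed
  have hK: "hom_K D \<xi> = E \<xi>" if "\<xi> \<in> trees rk" for \<xi>
    using evalD[OF that] by (simp add: hom_K_def)
  show ?thesis
    unfolding r_def[symmetric] Ks_def[symmetric] D_def[symmetric]
  proof (rule generic_iso[where h="hV \<delta>" and h'=E])
    show "car (nerode rk \<delta> F) = hV \<delta> ` trees rk"
      by (simp add: nerode_def acc_def hom_K_def hV_def)
    show "car (acc rk D) = E ` trees rk"
      using hK by (simp add: acc_def)
    show "ops (nerode rk \<delta> F) f (map (hV \<delta>) ts) = hV \<delta> (Nd f ts)" for f ts
      by (simp add: nerode_def acc_def hV_def)
    show "ops (acc rk D) f (map E ts) = E (Nd f ts)"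
      if "set ts \<subseteq> trees rk" "length ts = rk f" for f ts
    proof -
      have "map E ts = map (eval (ops D)) ts" using that evalD by auto
      moreover have "ops D f (map (eval (ops D)) ts) = E (Nd f ts)"
        using evalD[of "Nd f ts"] that by (simp add: trees_Nd)
      ultimately show ?thesis by (metis acc_def salg.select_convs(2))
    qed
    show "hV \<delta> a = hV \<delta> b \<longleftrightarrow> E a = E b" for a b by (rule eq)
  qed
qed

end
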